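(* Let $(G,\cdot)$ be a two-step nilpotent group and $n$ an integer, and define $a\circ b=a\cdot a^{-n}ba^{n}=ab[b,a]^n$ for $a,b\in G$. Then $(G,\circ)$ is a two-step nilpotent group.
   Context: A two-step nilpotent group is a group of nilpotency class at most $2$, i.e. all commutators are central; the commutator convention is $[a,b]=a^{-1}b^{-1}ab$. (For this operation, $(G,\cdot,\circ)$ is the skew left brace associated with the post-group $a\triangleright b=a^{-n}ba^n$ via $a\circ b=a\cdot(a\triangleright b)$.) *)

theory Defs
  imports "HOL-Algebra.Group"
begin

definition commutator :: "('a, 'b) monoid_scheme \<Rightarrow> 'a \<Rightarrow> 'a \<Rightarrow> 'a" where
  "commutator G a b = inv\<^bsub>G\<^esub> a \<otimes>\<^bsub>G\<^esub> inv\<^bsub>G\<^esub> b \<otimes>\<^bsub>G\<^esub> a \<otimes>\<^bsub>G\<^esub> b"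

definition two_step_nilpotent :: "('a, 'b) monoid_scheme \<Rightarrow> bool" where
  "two_step_nilpotent G \<longleftrightarrow> group G \<and>
     (\<forall>a\<in>carrier G. \<forall>b\<in>carrier G. \<forall>c\<in>carrier G.
        commutator G a b \<otimes>\<^bsub>G\<^esub> c = c \<otimes>\<^bsub>G\<^esub> commutator G a b)"

definition circ_struct :: "('a, 'b) monoid_scheme \<Rightarrow> int \<Rightarrow> 'a monoid" where
  "circ_struct G n =
     \<lparr> carrier = carrier G,
       mult = (\<lambda>a b. a \<otimes>\<^bsub>G\<^esub> (a [^]\<^bsub>G\<^esub> (- n) \<otimes>\<^bsub>G\<^esub> b \<otimes>\<^bsub>G\<^esub> a [^]\<^bsub>G\<^esub> n)),
       one = \<one>\<^bsub>G\<^esub> \<rparr>"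

end

theory Submission imports Defs begin

definition cmg :: "('a, 'b) monoid_scheme \<Rightarrow> int \<Rightarrow> 'a \<Rightarrow> 'a \<Rightarrow> 'a" where
  "cmg G n a b = a \<otimes>\<^bsub>G\<^esub> (a [^]\<^bsub>G\<^esub> (- n) \<otimes>\<^bsub>G\<^esub> b \<otimes>\<^bsub>G\<^esub> a [^]\<^bsub>G\<^esub> n)"

locale nil2 = group G for G (structure) +
  assumes cc: "\<And>a b c. a \<in> carrier G \<Longrightarrow> b \<in> carrier G \<Longrightarrow> c \<in> carrier G \<Longrightarrow>
     commutator G a b \<otimes> c = c \<otimes> commutator G a b"
begin

lemma canc1 [simp]: "x \<in> carrier G \<Longrightarrow> y \<in> carrier G \<Longrightarrow> x \<otimes> (inv x \<otimes> y) = y"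
  by (simp flip: m_assoc)
lemma canc2 [simp]: "x \<in> carrier G \<Longrightarrow> y \<in> carrier G \<Longrightarrow> inv x \<otimes> (x \<otimes> y) = y"
  by (simp flip: m_assoc)

definition cen where "cen z \<longleftrightarrow> z \<in> carrier G \<and> (\<forall>c\<in>carrier G. z \<otimes> c = c \<otimes> z)"

lemma cenD: "cen z \<Longrightarrow> z \<in> carrier G" "cen z \<Longrightarrow> c \<in> carrier G \<Longrightarrow> z \<otimes> c = c \<otimes> z"
  by (auto simp: cen_def)

lemma cen_comm: "a \<in> carrier G \<Longrightarrow> b \<in> carrier G \<Longrightarrow> cen (commutator G a b)"
  using cc by (simp add: cen_def commutator_def)

lemma cen_mult: assumes x: "cen x" and y: "cen y" shows "cen (x \<otimes> y)"
  unfolding cen_def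
proof (intro conjI ballI)
  have xc: "x \<in> carrier G" and yc: "y \<in> carrier G" using x y by (auto simp: cen_def)
  then show "x \<otimes> y \<in> carrier G" by simp
  fix c assume c: "c \<in> carrier G"
  have "x \<otimes> y \<otimes> c = x \<otimes> (y \<otimes> c)" using xc yc c by (simp add: m_assoc)
  also have "\<dots> = x \<otimes> (c \<otimes> y)" using y c by (simp add: cen_def)
  also have "\<dots> = (x \<otimes> c) \<otimes> y" using xc yc c by (simp add: m_assoc)
  also have "\<dots> = (c \<otimes> x) \<otimes> y" using x c by (simp add: cen_def)
  also have "\<dots> = c \<otimes> (x \<otimes> y)" using xc yc c by (simp add: m_assoc)
  finally show "x \<otimes> y \<otimes> c = c \<otimes> (x \<otimes> y)" .
qed

lemma cen_inv: assumes x: "cen x" shows "cen (inv x)"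
  unfolding cen_def
proof (intro conjI ballI)
  have xc: "x \<in> carrier G" using x by (auto simp: cen_def)
  then show "inv x \<in> carrier G" by simp
  fix c assume c: "c \<in> carrier G"
  have "x \<otimes> c = c \<otimes> x" using x c by (simp add: cen_def)
  hence "inv x \<otimes> (x \<otimes> c) \<otimes> inv x = inv x \<otimes> (c \<otimes> x) \<otimes> inv x" by simp
  thus "inv x \<otimes> c = c \<otimes> inv x" using xc c by (simp add: m_assoc)
qed

lemma cen_one: "cen \<one>" by (simp add: cen_def)

lemma cen_pow_nat: "cen x \<Longrightarrow> cen (x [^] (m::nat))"
proof -
  assume x: "cen x"
  have xc: "x \<in> carrier G" using cenD(1)[OF x] .
  show ?thesis unfolding cen_def
  proof (intro conjI ballI)
    show "x [^] m \<in> carrier G" using xc by (rule nat_pow_closed)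
    fix c assume c: "c \<in> carrier G"
    have "x \<otimes> c = c \<otimes> x" by (rule cenD(2)[OF x c])
    then show "x [^] m \<otimes> c = c \<otimes> x [^] m" by (rule group_commutes_pow[OF _ xc c])
  qed
qed

lemma cen_pow: assumes x: "cen x" shows "cen (x [^] (m::int))"
proof (cases m rule: int_cases)
  case (nonneg k)
  have "x [^] m = x [^] k" unfolding nonneg by (rule int_pow_int)
  then show ?thesis using cen_pow_nat[OF x, of k] by simp
next
  case (neg k)
  have "x [^] m = inv (x [^] Suc k)" unfolding neg using cenD(1)[OF x] by (rule int_pow_neg_int)
  then show ?thesis using cen_inv[OF cen_pow_nat[OF x, of "Suc k"]] by simp
qed

lemma swap: "x \<in> carrier G \<Longrightarrow> y \<in> carrier G \<Longrightarrow> x \<otimes> y = y \<otimes> x \<otimes> commutator G x y"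
  by (simp add: commutator_def m_assoc)

definition cj where "cj u x = inv u \<otimes> x \<otimes> u"

lemma cj_closed: "u \<in> carrier G \<Longrightarrow> x \<in> carrier G \<Longrightarrow> cj u x \<in> carrier G"
  by (simp add: cj_def)

lemma cj_mult: "u \<in> carrier G \<Longrightarrow> v \<in> carrier G \<Longrightarrow> x \<in> carrier G \<Longrightarrow> cj (u \<otimes> v) x = cj v (cj u x)"
  by (simp add: cj_def m_assoc inv_mult_group)

lemma cj_hom: "u \<in> carrier G \<Longrightarrow> y \<in> carrier G \<Longrightarrow> x \<in> carrier G \<Longrightarrow> cj u (x \<otimes> y) = cj u x \<otimes> cj u y"
  by (simp add: cj_def m_assoc)

lemma cj_cen: "cen z \<Longrightarrow> x \<in> carrier G \<Longrightarrow> cj z x = x"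
proof -
  assume z: "cen z" and x: "x \<in> carrier G"
  have zc: "z \<in> carrier G" using z by (simp add: cen_def)
  have "x \<otimes> z = z \<otimes> x" using z x by (simp add: cen_def)
  thus ?thesis unfolding cj_def using zc x by (simp add: m_assoc)
qed

lemma cj_cenr: "cen z \<Longrightarrow> u \<in> carrier G \<Longrightarrow> x \<in> carrier G \<Longrightarrow> cj (u \<otimes> z) x = cj u x"
proof -
  assume z: "cen z" and u: "u \<in> carrier G" and x: "x \<in> carrier G"
  have zc: "z \<in> carrier G" using z by (simp add: cen_def)
  have "cj (u \<otimes> z) x = cj z (cj u x)" using u zc x by (rule cj_mult)
  also have "\<dots> = cj u x" using z cj_closed[OF u x] by (rule cj_cen)
  finally show ?thesis .
qed

lemma cj_expand: "u \<in> carrier G \<Longrightarrow> x \<in> carrier G \<Longrightarrow> cj u x = x \<otimes> commutator G x u"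
  by (simp add: cj_def commutator_def m_assoc)

lemma cj_self: "x \<in> carrier G \<Longrightarrow> cj (x [^] (m::int)) x = x"
proof -
  assume x: "x \<in> carrier G"
  have "x \<otimes> x [^] m = x [^] m \<otimes> x"
    using int_pow_mult[OF x, of 1 m] int_pow_mult[OF x, of m 1] x by (simp add: add.commute)
  thus ?thesis unfolding cj_def using x by (simp add: m_assoc)
qed


lemma pow_prod_nat:
  assumes a: "a \<in> carrier G" and b: "b \<in> carrier G"
  shows "\<exists>z. cen z \<and> (a \<otimes> b) [^] (k::nat) = a [^] k \<otimes> b [^] k \<otimes> z"
proof (induction k)
  case 0
  then show ?case using cen_one by auto
next
  case (Suc k)
  then obtain z where z: "cen z" and IH: "(a \<otimes> b) [^] k = a [^] k \<otimes> b [^] k \<otimes> z" by blast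
  have zc: "z \<in> carrier G" using cenD(1)[OF z] .
  define c where "c = commutator G (b [^] k) a"
  have cc: "cen c" unfolding c_def using a b by (simp add: cen_comm)
  hence ccar: "c \<in> carrier G" by (rule cenD(1))
  have e1: "b [^] k \<otimes> a = a \<otimes> b [^] k \<otimes> c" unfolding c_def using a b by (simp add: swap[of "b [^] k" a])
  have "(a \<otimes> b) [^] Suc k = (a [^] k \<otimes> b [^] k \<otimes> z) \<otimes> (a \<otimes> b)" using IH by simp
  also have "\<dots> = a [^] k \<otimes> b [^] k \<otimes> (z \<otimes> (a \<otimes> b))" using a b zc by (simp add: m_assoc)
  also have "\<dots> = a [^] k \<otimes> b [^] k \<otimes> ((a \<otimes> b) \<otimes> z)" using a b z cenD(2)[of z "a \<otimes> b"] by simp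
  also have "\<dots> = a [^] k \<otimes> (b [^] k \<otimes> a) \<otimes> b \<otimes> z" using a b zc by (simp add: m_assoc)
  also have "\<dots> = a [^] k \<otimes> (a \<otimes> b [^] k \<otimes> c) \<otimes> b \<otimes> z" using e1 by simp
  also have "\<dots> = a [^] k \<otimes> a \<otimes> b [^] k \<otimes> (c \<otimes> b) \<otimes> z" using a b zc ccar by (simp add: m_assoc)
  also have "\<dots> = a [^] k \<otimes> a \<otimes> b [^] k \<otimes> (b \<otimes> c) \<otimes> z" using b cc cenD(2)[of c b] by simp
  also have "\<dots> = (a [^] k \<otimes> a) \<otimes> (b [^] k \<otimes> b) \<otimes> (c \<otimes> z)" using a b zc ccar by (simp add: m_assoc)
  also have "\<dots> = a [^] Suc k \<otimes> b [^] Suc k \<otimes> (c \<otimes> z)" by simp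
  finally show ?case using cen_mult[OF cc z] by blast
qed

lemma pow_prod:
  assumes a: "a \<in> carrier G" and b: "b \<in> carrier G"
  shows "\<exists>z. cen z \<and> (a \<otimes> b) [^] (m::int) = a [^] m \<otimes> b [^] m \<otimes> z"
proof (cases m rule: int_cases)
  case (nonneg k)
  then show ?thesis using pow_prod_nat[OF a b, of k] by (simp add: int_pow_int)
next
  case (neg k)
  obtain z where z: "cen z" and P: "(a \<otimes> b) [^] Suc k = a [^] Suc k \<otimes> b [^] Suc k \<otimes> z"
    using pow_prod_nat[OF a b, of "Suc k"] by blast
  have zc: "z \<in> carrier G" using cenD(1)[OF z] .
  define x where "x = inv (a [^] Suc k)"
  define y where "y = inv (b [^] Suc k)"
  have x: "x \<in> carrier G" and y: "y \<in> carrier G" using a b by (auto simp: x_def y_def)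
  define c where "c = commutator G y x"
  have cc: "cen c" unfolding c_def using x y by (simp add: cen_comm)
  hence ccar: "c \<in> carrier G" by (rule cenD(1))
  have m: "m = - int (Suc k)" using neg by simp
  have "(a \<otimes> b) [^] m = inv ((a \<otimes> b) [^] Suc k)" using a b by (simp only: m int_pow_neg_int[OF m_closed[OF a b]])
  also have "\<dots> = inv z \<otimes> (y \<otimes> x)" using a b zc P by (simp add: x_def y_def inv_mult_group m_assoc)
  also have "\<dots> = inv z \<otimes> (x \<otimes> y \<otimes> c)" unfolding c_def using swap[OF y x] by simp
  also have "\<dots> = (x \<otimes> y \<otimes> c) \<otimes> inv z" using cenD(2)[OF cen_inv[OF z]] x y ccar by simp
  also have "\<dots> = x \<otimes> y \<otimes> (c \<otimes> inv z)" using x y ccar zc by (simp add: m_assoc)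
  also have "\<dots> = a [^] m \<otimes> b [^] m \<otimes> (c \<otimes> inv z)" using a b by (simp only: m x_def y_def int_pow_neg_int)
  finally show ?thesis using cen_mult[OF cc cen_inv[OF z]] by blast
qed


lemma cj_of_cen: "cen k \<Longrightarrow> u \<in> carrier G \<Longrightarrow> cj u k = k"
proof -
  assume k: "cen k" and u: "u \<in> carrier G"
  have kc: "k \<in> carrier G" using cenD(1)[OF k] .
  have "inv u \<otimes> k = k \<otimes> inv u" using cenD(2)[OF k inv_closed[OF u]] by simp
  hence "inv u \<otimes> k \<otimes> u = k \<otimes> inv u \<otimes> u" by simp
  then show ?thesis unfolding cj_def using u kc by (simp add: m_assoc)
qed


lemma cm_closed: "a \<in> carrier G \<Longrightarrow> b \<in> carrier G \<Longrightarrow> cmg G n a b \<in> carrier G"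
  by (simp add: cmg_def)

lemma cm_cj: "a \<in> carrier G \<Longrightarrow> b \<in> carrier G \<Longrightarrow> cmg G n a b = a \<otimes> cj (a [^] n) b"
  by (simp add: cmg_def cj_def int_pow_neg)

lemma cm_cen: assumes a: "a \<in> carrier G" and b: "b \<in> carrier G"
  shows "\<exists>z. cen z \<and> cmg G n a b = a \<otimes> b \<otimes> z"
proof -
  have "cmg G n a b = a \<otimes> b \<otimes> commutator G b (a [^] n)"
    using a b by (simp add: cm_cj cj_expand m_assoc commutator_def)
  then show ?thesis using cen_comm a b by blast
qed


lemma cm_assoc:
  assumes a: "a \<in> carrier G" and b: "b \<in> carrier G" and c: "c \<in> carrier G"
  shows "cmg G n (cmg G n a b) c = cmg G n a (cmg G n b c)"
proof -
  obtain z1 where z1: "cen z1" and e1: "cmg G n a b = a \<otimes> b \<otimes> z1" using cm_cen[OF a b, of n] by blast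
  have z1c: "z1 \<in> carrier G" using cenD(1)[OF z1] .
  obtain w1 where w1: "cen w1" and e2: "(a \<otimes> b \<otimes> z1) [^] n = (a \<otimes> b) [^] n \<otimes> z1 [^] n \<otimes> w1"
    using pow_prod[OF m_closed[OF a b] z1c] by blast
  obtain w2 where w2: "cen w2" and e3: "(a \<otimes> b) [^] n = a [^] n \<otimes> b [^] n \<otimes> w2"
    using pow_prod[OF a b] by blast
  have an: "a [^] n \<in> carrier G" and bn: "b [^] n \<in> carrier G" using a b by auto
  have w1c: "w1 \<in> carrier G" and w2c: "w2 \<in> carrier G" using cenD(1)[OF w1] cenD(1)[OF w2] by auto
  have "cj ((cmg G n a b) [^] n) c = cj (a [^] n \<otimes> b [^] n \<otimes> w2 \<otimes> z1 [^] n \<otimes> w1) c"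
    using e1 e2 e3 by simp
  also have "\<dots> = cj (a [^] n \<otimes> b [^] n) c"
    using an bn w1c w2c z1c c by (simp add: cj_cenr w1 w2 cen_pow z1)
  also have "\<dots> = cj (b [^] n) (cj (a [^] n) c)" using an bn c by (simp add: cj_mult)
  finally have L: "cj ((cmg G n a b) [^] n) c = cj (b [^] n) (cj (a [^] n) c)" .
  have "cj (b [^] n \<otimes> a [^] n) c = cj (a [^] n \<otimes> b [^] n \<otimes> commutator G (b [^] n) (a [^] n)) c"
    using swap[OF bn an] by simp
  also have "\<dots> = cj (a [^] n \<otimes> b [^] n) c" using an bn c by (simp add: cj_cenr cen_comm)
  also have "\<dots> = cj (b [^] n) (cj (a [^] n) c)" using an bn c by (simp add: cj_mult)
  finally have R: "cj (a [^] n) (cj (b [^] n) c) = cj (b [^] n) (cj (a [^] n) c)"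
    using an bn c by (simp add: cj_mult)
  have "cmg G n (cmg G n a b) c = a \<otimes> cj (a [^] n) b \<otimes> cj (b [^] n) (cj (a [^] n) c)"
    by (simp only: cm_cj[OF cm_closed[OF a b] c] L) (simp only: cm_cj[OF a b])
  also have "\<dots> = a \<otimes> (cj (a [^] n) b \<otimes> cj (a [^] n) (cj (b [^] n) c))"
    unfolding R using a b c an bn by (simp add: m_assoc cj_closed)
  also have "\<dots> = cmg G n a (cmg G n b c)"
    using a b c an bn by (simp add: cm_cj cm_closed cj_hom cj_closed)
  finally show ?thesis .
qed

lemma cm_one: "a \<in> carrier G \<Longrightarrow> cmg G n \<one> a = a"
  by (simp add: cmg_def)

lemma cm_inv: assumes a: "a \<in> carrier G" shows "cmg G n (inv a) a = \<one>"
proof -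
  have e: "inv a [^] n = a [^] (- n)" using a by (simp add: int_pow_inv int_pow_neg)
  have "cmg G n (inv a) a = inv a \<otimes> cj (inv a [^] n) a" using a by (simp add: cm_cj)
  also have "\<dots> = inv a \<otimes> a" by (simp only: e cj_self[OF a])
  finally show ?thesis using a by simp
qed


lemma reorder:
  assumes p: "p \<in> carrier G" and q: "q \<in> carrier G" and r: "r \<in> carrier G" and s: "s \<in> carrier G"
  and z1: "cen z1" and z2: "cen z2" and z3: "cen z3"
  shows "((p \<otimes> q \<otimes> z1) \<otimes> r \<otimes> z2) \<otimes> s \<otimes> z3 = p \<otimes> q \<otimes> r \<otimes> s \<otimes> (z1 \<otimes> z2 \<otimes> z3)"
proof -
  have c: "z1 \<in> carrier G" "z2 \<in> carrier G" "z3 \<in> carrier G" using z1 z2 z3 cenD by auto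
  have "((p \<otimes> q \<otimes> z1) \<otimes> r \<otimes> z2) \<otimes> s \<otimes> z3 = p \<otimes> q \<otimes> (z1 \<otimes> r) \<otimes> z2 \<otimes> s \<otimes> z3"
    using p q r s c by (simp add: m_assoc)
  also have "\<dots> = p \<otimes> q \<otimes> (r \<otimes> z1) \<otimes> z2 \<otimes> s \<otimes> z3" using cenD(2)[OF z1 r] by simp
  also have "\<dots> = p \<otimes> q \<otimes> r \<otimes> ((z1 \<otimes> z2) \<otimes> s) \<otimes> z3"
    using p q r s c by (simp add: m_assoc)
  also have "\<dots> = p \<otimes> q \<otimes> r \<otimes> (s \<otimes> (z1 \<otimes> z2)) \<otimes> z3" using cenD(2)[OF cen_mult[OF z1 z2] s] by simp
  also have "\<dots> = p \<otimes> q \<otimes> r \<otimes> s \<otimes> (z1 \<otimes> z2 \<otimes> z3)"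
    using p q r s c by (simp add: m_assoc)
  finally show ?thesis .
qed

lemma cm_comm_cen:
  assumes a: "a \<in> carrier G" and b: "b \<in> carrier G"
  shows "cen (cmg G n (cmg G n (cmg G n (inv a) (inv b)) a) b)"
proof -
  obtain z1 where z1: "cen z1" and e1: "cmg G n (inv a) (inv b) = inv a \<otimes> inv b \<otimes> z1"
    using cm_cen[OF inv_closed[OF a] inv_closed[OF b], of n] by blast
  obtain z2 where z2: "cen z2" and e2: "cmg G n (inv a \<otimes> inv b \<otimes> z1) a = (inv a \<otimes> inv b \<otimes> z1) \<otimes> a \<otimes> z2"
    using cm_cen[OF _ a, of "inv a \<otimes> inv b \<otimes> z1" n] a b z1 cenD(1)[OF z1] by auto
  obtain z3 where z3: "cen z3" and e3: "cmg G n ((inv a \<otimes> inv b \<otimes> z1) \<otimes> a \<otimes> z2) b = ((inv a \<otimes> inv b \<otimes> z1) \<otimes> a \<otimes> z2) \<otimes> b \<otimes> z3"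
    using cm_cen[OF _ b, of "(inv a \<otimes> inv b \<otimes> z1) \<otimes> a \<otimes> z2" n] a b cenD(1)[OF z1] cenD(1)[OF z2] by auto
  have eq: "cmg G n (cmg G n (cmg G n (inv a) (inv b)) a) b = commutator G a b \<otimes> (z1 \<otimes> z2 \<otimes> z3)"
    unfolding e1 e2 e3 commutator_def by (rule reorder[OF inv_closed[OF a] inv_closed[OF b] a b z1 z2 z3])
  show ?thesis unfolding eq by (rule cen_mult[OF cen_comm[OF a b] cen_mult[OF cen_mult[OF z1 z2] z3]])
qed

end

lemma circ_eq: "circ_struct G n = \<lparr>carrier = carrier G, mult = cmg G n, one = \<one>\<^bsub>G\<^esub>\<rparr>"
  by (simp add: circ_struct_def fun_eq_iff cmg_def)

theorem proposition5p4:
  fixes G :: "('a, 'b) monoid_scheme" and n :: int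
  assumes "two_step_nilpotent G"
  shows "two_step_nilpotent (circ_struct G n)"
proof -
  have grp: "group G" using assms by (simp add: two_step_nilpotent_def)
  have ccG: "\<And>a b c. a \<in> carrier G \<Longrightarrow> b \<in> carrier G \<Longrightarrow> c \<in> carrier G \<Longrightarrow>
     commutator G a b \<otimes>\<^bsub>G\<^esub> c = c \<otimes>\<^bsub>G\<^esub> commutator G a b"
    using assms by (simp add: two_step_nilpotent_def)
  have "nil2 G" unfolding nil2_def nil2_axioms_def using grp ccG by blast
  then interpret N: nil2 G .
  let ?H = "circ_struct G n"
  have cH: "carrier ?H = carrier G" and mH: "\<And>a b. a \<otimes>\<^bsub>?H\<^esub> b = cmg G n a b"
    and oH: "\<one>\<^bsub>?H\<^esub> = \<one>\<^bsub>G\<^esub>" by (simp_all add: circ_eq)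
  have gH: "group ?H"
  proof (rule groupI, unfold cH mH oH)
    show "\<And>x y. x \<in> carrier G \<Longrightarrow> y \<in> carrier G \<Longrightarrow> cmg G n x y \<in> carrier G"
      by (rule N.cm_closed)
    show "\<one>\<^bsub>G\<^esub> \<in> carrier G" by simp
    show "\<And>x y z. x \<in> carrier G \<Longrightarrow> y \<in> carrier G \<Longrightarrow> z \<in> carrier G \<Longrightarrow>
        cmg G n (cmg G n x y) z = cmg G n x (cmg G n y z)" by (rule N.cm_assoc)
    show "\<And>x. x \<in> carrier G \<Longrightarrow> cmg G n \<one>\<^bsub>G\<^esub> x = x" by (rule N.cm_one)
    show "\<And>x. x \<in> carrier G \<Longrightarrow> \<exists>y\<in>carrier G. cmg G n y x = \<one>\<^bsub>G\<^esub>"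
      using N.cm_inv by blast
  qed
  have invH: "\<And>a. a \<in> carrier G \<Longrightarrow> inv\<^bsub>?H\<^esub> a = inv\<^bsub>G\<^esub> a"
  proof -
    fix a assume a: "a \<in> carrier G"
    show "inv\<^bsub>?H\<^esub> a = inv\<^bsub>G\<^esub> a"
      using group.inv_equality[OF gH, of "inv\<^bsub>G\<^esub> a" a] a N.cm_inv[OF a] unfolding cH mH oH by simp
  qed
  show ?thesis unfolding two_step_nilpotent_def
  proof (intro conjI ballI gH)
    fix a b c assume a: "a \<in> carrier ?H" and b: "b \<in> carrier ?H" and c: "c \<in> carrier ?H"
    hence a: "a \<in> carrier G" and b: "b \<in> carrier G" and c: "c \<in> carrier G" unfolding cH by auto
    define K where "K = cmg G n (cmg G n (cmg G n (inv\<^bsub>G\<^esub> a) (inv\<^bsub>G\<^esub> b)) a) b"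
    have KH: "commutator ?H a b = K" unfolding commutator_def K_def mH using a b invH by simp
    have Kc: "N.cen K" unfolding K_def using a b by (rule N.cm_comm_cen)
    have Kcar: "K \<in> carrier G" using N.cenD(1)[OF Kc] .
    have "cmg G n K c = K \<otimes>\<^bsub>G\<^esub> c"
      using N.cm_cj[OF Kcar c] N.cj_cen[OF N.cen_pow[OF Kc] c] by simp
    also have "\<dots> = c \<otimes>\<^bsub>G\<^esub> K" using N.cenD(2)[OF Kc c] .
    also have "\<dots> = cmg G n c K"
      using N.cm_cj[OF c Kcar] N.cj_of_cen[OF Kc N.int_pow_closed[OF c]] by simp
    finally show "commutator ?H a b \<otimes>\<^bsub>?H\<^esub> c = c \<otimes>\<^bsub>?H\<^esub> commutator ?H a b"
      unfolding KH mH .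
  qed
qed

end
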